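(* For complex $a,c$ with $|ac/q|<1$, \begin{align*} \frac{\bigl(q^2, ac; q^2\bigr)_\infty}{\bigl(q^2 a, q^2 c; q^2\bigr)_\infty}\sum_{n=0}^\infty \frac{\bigl(q^2/a, q^2/c; q^2\bigr)_n (ac/q)^n}{(q; q)_{2n} \bigl(1+q^{2n+1}\bigr)} =\sum_{n=0}^\infty \sum_{j=-n}^n \bigl(1-q^{2n+1}\bigr) q^{n^2-j^2-j}\frac{\bigl(q^2/a, q^2/c; q^2\bigr)_n (ac)^n}{\bigl(q^2 a, q^2 c; q^2\bigr)_n}. \end{align*}
   Context: Throughout, $q$ is a complex number with $0<|q|<1$. For $x\in\mathbb{C}$ and base $p\in\{q,q^2\}$, $(x;p)_\infty=\prod_{k=0}^\infty(1-xp^k)$ and, for an integer $n\ge 0$, $(x;p)_n=\prod_{k=0}^{n-1}(1-xp^k)$; also $(x_1,\dots,x_m;p)_n=(x_1;p)_n\cdots(x_m;p)_n$ for $n$ an integer or $\infty$. *)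

theory Defs
  imports "HOL-Analysis.Analysis"
begin

definition qpoch :: "complex \<Rightarrow> complex \<Rightarrow> nat \<Rightarrow> complex" where
  "qpoch x p n = (\<Prod>k<n. 1 - x * p ^ k)"

definition qpoch_inf :: "complex \<Rightarrow> complex \<Rightarrow> complex" where
  "qpoch_inf x p = (\<Prod>k. 1 - x * p ^ k)"

end

theory Submission
  imports Defs
begin

lemma qpoch_0 [simp]: "qpoch x p 0 = 1"
  by (simp add: qpoch_def)

lemma qpoch_Suc: "qpoch x p (Suc n) = qpoch x p n * (1 - x * p ^ n)"
  by (simp add: qpoch_def)

lemma qpoch_add: "qpoch x p (n + m) = qpoch x p n * qpoch (x * p ^ n) p m"
proof (induction m)
  case 0 then show ?case by simp
next
  case (Suc m)
  then show ?case by (simp add: qpoch_Suc power_add mult_ac)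
qed

lemma qpoch_nonzero:
  assumes "\<And>k. k < n \<Longrightarrow> x * p ^ k \<noteq> 1"
  shows "qpoch x p n \<noteq> 0"
  using assms unfolding qpoch_def by (auto simp: prod_zero_iff)

lemma qpoch_convergent_prod:
  fixes p x :: complex
  assumes "norm p < 1"
  shows "convergent_prod (\<lambda>k. 1 - x * p ^ k)"
proof -
  have "summable (\<lambda>k. norm x * norm p ^ k)"
    using assms by (intro summable_mult summable_geometric) auto
  then have "summable (\<lambda>k. norm ((1 - x * p ^ k) - 1))"
    by (simp add: norm_mult norm_power)
  then show ?thesis
    by (intro abs_convergent_prod_imp_convergent_prod summable_imp_abs_convergent_prod)
qed

lemma qpoch_tendsto:
  fixes p x :: complex
  assumes "norm p < 1"
  shows "(\<lambda>n. qpoch x p n) \<longlonglongrightarrow> qpoch_inf x p"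
proof -
  have "(\<lambda>n. \<Prod>k\<le>n. 1 - x * p ^ k) \<longlonglongrightarrow> qpoch_inf x p"
    unfolding qpoch_inf_def by (rule convergent_prod_LIMSEQ[OF qpoch_convergent_prod[OF assms]])
  then have "(\<lambda>n. qpoch x p (Suc n)) \<longlonglongrightarrow> qpoch_inf x p"
    by (simp add: qpoch_def lessThan_Suc_atMost)
  then show ?thesis by (rule LIMSEQ_imp_Suc)
qed

lemma qpoch_inf_nonzero:
  fixes p x :: complex
  assumes "norm p < 1" "\<And>k. x * p ^ k \<noteq> 1"
  shows "qpoch_inf x p \<noteq> 0"
  unfolding qpoch_inf_def
  by (rule prodinf_nonzero[OF qpoch_convergent_prod[OF assms(1)]]) (use assms(2) in auto)

lemma qpoch_inf_split:
  fixes p x :: complex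
  assumes "norm p < 1"
  shows "qpoch_inf x p = qpoch x p n * qpoch_inf (x * p ^ n) p"
proof -
  have "(\<lambda>m. qpoch x p (m + n)) \<longlonglongrightarrow> qpoch_inf x p"
    using LIMSEQ_ignore_initial_segment[OF qpoch_tendsto[OF assms]] .
  moreover have "(\<lambda>m. qpoch x p (m + n)) \<longlonglongrightarrow> qpoch x p n * qpoch_inf (x * p ^ n) p"
    unfolding add.commute[of _ n] qpoch_add
    by (intro tendsto_mult tendsto_const qpoch_tendsto assms)
  ultimately show ?thesis by (rule LIMSEQ_unique)
qed

lemma qpoch_bounded:
  fixes p x :: complex
  assumes "norm p < 1"
  obtains B where "B > 0" "\<And>n. norm (qpoch x p n) \<le> B"
proof -
  have "Bseq (\<lambda>n. qpoch x p n)"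
    using qpoch_tendsto[OF assms] by (intro convergent_imp_Bseq convergentI)
  then show ?thesis using that by (auto simp: Bseq_def)
qed

lemma tendsto_nonzero_lower_bound:
  fixes f :: "nat \<Rightarrow> complex"
  assumes "f \<longlonglongrightarrow> l" "l \<noteq> 0" "\<And>n. f n \<noteq> 0"
  obtains c where "c > 0" "\<And>n. c \<le> norm (f n)"
proof -
  have "(\<lambda>n. inverse (f n)) \<longlonglongrightarrow> inverse l"
    using assms by (intro tendsto_inverse) auto
  then have "Bseq (\<lambda>n. inverse (f n))"
    by (intro convergent_imp_Bseq convergentI)
  then obtain B where B: "B > 0" "\<And>n. norm (inverse (f n)) \<le> B" by (auto simp: Bseq_def)
  show ?thesis
  proof (rule that[of "1 / B"])
    show "1 / B > 0" using B by simp
    fix n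
    have "norm (inverse (f n)) \<le> B" by (rule B(2))
    then have "inverse (norm (f n)) \<le> B" by (simp add: norm_inverse)
    then show "1 / B \<le> norm (f n)"
      using B(1) assms(3)[of n]
      by (metis divide_inverse inverse_inverse_eq le_imp_inverse_le mult_1 zero_less_norm_iff inverse_positive_iff_positive)
  qed
qed

lemma qpoch_lower_bound:
  fixes p x :: complex
  assumes "norm p < 1" "\<And>k. x * p ^ k \<noteq> 1"
  obtains c where "c > 0" "\<And>n. c \<le> norm (qpoch x p n)"
  using tendsto_nonzero_lower_bound[OF qpoch_tendsto[OF assms(1)] qpoch_inf_nonzero[OF assms]]
    qpoch_nonzero assms(2) by metis

lemma pow_ne_1:
  fixes p :: complex
  assumes "norm p < 1" "k > 0"
  shows "p ^ k \<noteq> 1"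
proof
  assume "p ^ k = 1"
  then have "norm p ^ k = 1" by (metis norm_one norm_power)
  moreover have "norm p ^ k < 1" using assms by (simp add: power_less_one_iff)
  ultimately show False by simp
qed

lemma small_ne_1:
  fixes y :: complex
  assumes "norm y < 1" shows "y \<noteq> 1"
  using assms by auto

definition qt :: "complex \<Rightarrow> complex \<Rightarrow> complex \<Rightarrow> complex \<Rightarrow> complex \<Rightarrow> nat \<Rightarrow> complex" where
  "qt A B C z p m = qpoch A p m * qpoch B p m * z ^ m / (qpoch p p m * qpoch C p m)"

lemma pp_ne_1:
  fixes p :: complex
  assumes "norm p < 1" shows "p * p ^ k \<noteq> 1"
  using pow_ne_1[OF assms, of "Suc k"] by simp

lemma qt_uniform_bound:
  fixes A B C p :: complex
  assumes p: "norm p < 1" and C: "\<And>k. C * p ^ k \<noteq> 1"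
  obtains M where "M > 0" "\<And>K w m. norm (qt A B (C * p ^ K) w p m) \<le> M * norm w ^ m"
proof -
  obtain BA where BA: "BA > 0" "\<And>n. norm (qpoch A p n) \<le> BA" using qpoch_bounded[OF p] by blast
  obtain BB where BB: "BB > 0" "\<And>n. norm (qpoch B p n) \<le> BB" using qpoch_bounded[OF p] by blast
  obtain BC where BC: "BC > 0" "\<And>n. norm (qpoch C p n) \<le> BC" using qpoch_bounded[OF p] by blast
  obtain LP where LP: "LP > 0" "\<And>n. LP \<le> norm (qpoch p p n)"
    using qpoch_lower_bound[OF p pp_ne_1[OF p]] by blast
  obtain LC where LC: "LC > 0" "\<And>n. LC \<le> norm (qpoch C p n)"
    using qpoch_lower_bound[OF p C] by blast
  show ?thesis
  proof (rule that[of "BA * BB * BC / (LP * LC)"])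
    show "BA * BB * BC / (LP * LC) > 0" using BA BB BC LP LC by simp
    fix K w m
    have D: "norm (qpoch (C * p ^ K) p m) \<ge> LC / BC"
    proof -
      have "norm (qpoch C p K) * norm (qpoch (C * p ^ K) p m) = norm (qpoch C p (K + m))"
        by (simp add: qpoch_add norm_mult)
      also have "\<dots> \<ge> LC" by (rule LC(2))
      finally have "LC \<le> norm (qpoch C p K) * norm (qpoch (C * p ^ K) p m)" .
      also have "\<dots> \<le> BC * norm (qpoch (C * p ^ K) p m)"
        by (intro mult_right_mono BC(2)) auto
      finally show ?thesis using BC(1) by (simp add: divide_le_eq mult.commute)
    qed
    have num: "norm (qpoch A p m * qpoch B p m * w ^ m) \<le> BA * BB * norm w ^ m"
      unfolding norm_mult norm_power
      by (intro mult_mono BA(2) BB(2)) (use BA BB in auto)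
    have den: "LP * (LC / BC) \<le> norm (qpoch p p m * qpoch (C * p ^ K) p m)"
      unfolding norm_mult
      by (intro mult_mono LP(2) D) (use LP LC BC in auto)
    have "norm (qt A B (C * p ^ K) w p m) =
          norm (qpoch A p m * qpoch B p m * w ^ m) / norm (qpoch p p m * qpoch (C * p ^ K) p m)"
      by (simp add: qt_def norm_divide)
    also have "\<dots> \<le> (BA * BB * norm w ^ m) / (LP * (LC / BC))"
      by (rule frac_le[OF _ num _ den]) (use BA BB LP LC BC in auto)
    also have "\<dots> = BA * BB * BC / (LP * LC) * norm w ^ m"
      using BC LC LP by (simp add: field_simps)
    finally show "norm (qt A B (C * p ^ K) w p m) \<le> BA * BB * BC / (LP * LC) * norm w ^ m" .
  qed
qed

lemma qt_summable:
  fixes A B C p :: complex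
  assumes p: "norm p < 1" and C: "\<And>k. C * p ^ k \<noteq> 1" and w: "norm w < 1"
  shows "summable (\<lambda>m. norm (qt A B (C * p ^ K) w p m))"
proof -
  obtain M where M: "M > 0" "\<And>K w m. norm (qt A B (C * p ^ K) w p m) \<le> M * norm w ^ m"
    using qt_uniform_bound[OF p C] by blast
  show ?thesis
    by (rule summable_comparison_test'[where N=0, OF summable_mult[OF summable_geometric]])
       (use w M in auto)
qed

lemma qt_summable0:
  fixes A B C p :: complex
  assumes p: "norm p < 1" and C: "\<And>k. C * p ^ k \<noteq> 1" and w: "norm w < 1"
  shows "summable (\<lambda>m. norm (qt A B C w p m))"
  using qt_summable[OF p C w, of A B 0] by simp

lemma contig_alg:
  fixes A B C z x :: complex
  assumes "A * B * z = C" "1 - C * x \<noteq> 0"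
  shows "(1 - z) - (1 - A * z) * (1 - B * z) * x / (1 - C * x)
       = (1 - x) - (1 - A * x) * (1 - B * x) * z / (1 - C * x)"
proof -
  have poly: "(1 - z) * (1 - C * x) - (1 - A * z) * (1 - B * z) * x
            = (1 - x) * (1 - C * x) - (1 - A * x) * (1 - B * x) * z"
    unfolding assms(1)[symmetric] by algebra
  have "(1 - z) - (1 - A * z) * (1 - B * z) * x / (1 - C * x)
       = ((1 - z) * (1 - C * x) - (1 - A * z) * (1 - B * z) * x) / (1 - C * x)"
    using assms(2) by (simp add: field_simps)
  also have "\<dots> = ((1 - x) * (1 - C * x) - (1 - A * x) * (1 - B * x) * z) / (1 - C * x)"
    by (simp only: poly)
  also have "\<dots> = (1 - x) - (1 - A * x) * (1 - B * x) * z / (1 - C * x)"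
    using assms(2) by (simp add: field_simps)
  finally show ?thesis .
qed

lemma qpoch_shift1:
  fixes C p :: complex
  assumes "C \<noteq> 1"
  shows "qpoch (C * p) p m = qpoch C p m * (1 - C * p ^ m) / (1 - C)"
proof -
  have "qpoch C p (1 + m) = qpoch C p 1 * qpoch (C * p) p m" using qpoch_add[of C p 1 m] by simp
  moreover have "qpoch C p (1 + m) = qpoch C p m * (1 - C * p ^ m)"
    by (simp add: qpoch_Suc)
  ultimately show ?thesis using assms by (simp add: qpoch_def field_simps)
qed

lemma qt_shift:
  fixes A B C z p :: complex
  assumes "C \<noteq> 1" "1 - C * p ^ m \<noteq> 0"
  shows "qt A B (C * p) (z * p) p m = qt A B C z p m * p ^ m * (1 - C) / (1 - C * p ^ m)"
  using assms by (simp add: qt_def qpoch_shift1 power_mult_distrib field_simps)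

lemma qt_Suc:
  fixes A B C z p :: complex
  assumes "1 - p * p ^ m \<noteq> 0" "1 - C * p ^ m \<noteq> 0" "qpoch p p m \<noteq> 0" "qpoch C p m \<noteq> 0"
  shows "qt A B C z p (Suc m) = qt A B C z p m * ((1 - A * p ^ m) * (1 - B * p ^ m) * z)
           / ((1 - p * p ^ m) * (1 - C * p ^ m))"
  using assms by (simp add: qt_def qpoch_Suc field_simps)

lemma contiguity:
  fixes A B C z p :: complex
  assumes p: "norm p < 1" and z: "norm z < 1" and ABC: "A * B * z = C"
    and C: "\<And>k. C * p ^ k \<noteq> 1"
  shows "(1 - z) * suminf (qt A B C z p)
       = (1 - A * z) * (1 - B * z) / (1 - C) * suminf (qt A B (C * p) (z * p) p)"
proof -
  define T where "T = qt A B C z p"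
  define T' where "T' = qt A B (C * p) (z * p) p"
  define u where "u m = (1 - p ^ m) * T m" for m
  define c where "c = (1 - A * z) * (1 - B * z) / (1 - C)"
  have C1: "C \<noteq> 1" using C[of 0] by simp
  have Cm: "1 - C * p ^ m \<noteq> 0" for m using C[of m] by simp
  have pm: "1 - p * p ^ m \<noteq> 0" for m using pp_ne_1[OF p, of m] by simp
  have qp: "qpoch p p m \<noteq> 0" for m by (rule qpoch_nonzero) (use pp_ne_1[OF p] in auto)
  have qC: "qpoch C p m \<noteq> 0" for m by (rule qpoch_nonzero) (use C in auto)
  have C': "\<And>k. (C * p) * p ^ k \<noteq> 1" using C by (metis mult.assoc power_Suc)
  have zp: "norm (z * p) < 1" using mult_strict_mono[of "norm z" 1 "norm p" 1] p z by (simp add: norm_mult)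
  have sT: "summable T"
    unfolding T_def by (rule summable_norm_cancel[OF qt_summable0[OF p C z]])
  have sT': "summable T'"
    unfolding T'_def by (rule summable_norm_cancel[OF qt_summable0[OF p C' zp]])
  have termeq: "(1 - z) * T m - c * T' m = u m - u (Suc m)" for m
  proof -
    have C1': "1 - C \<noteq> 0" using C1 by simp
    have cT: "c * T' m = T m * ((1 - A * z) * (1 - B * z) * p ^ m / (1 - C * p ^ m))"
      unfolding T'_def c_def T_def qt_shift[OF C1 Cm] using C1' by simp
    have "(1 - z) * T m - c * T' m = T m * ((1 - z) - (1 - A * z) * (1 - B * z) * p ^ m / (1 - C * p ^ m))"
      unfolding cT by (simp add: algebra_simps)
    also have "\<dots> = T m * ((1 - p ^ m) - (1 - A * p ^ m) * (1 - B * p ^ m) * z / (1 - C * p ^ m))"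
      by (subst contig_alg[OF ABC Cm]) simp
    also have "\<dots> = u m - u (Suc m)"
    proof -
      have "u (Suc m) = (1 - p * p ^ m) * (T m * ((1 - A * p ^ m) * (1 - B * p ^ m) * z)
           / ((1 - p * p ^ m) * (1 - C * p ^ m)))"
        unfolding u_def T_def qt_Suc[OF pm Cm qp qC] by simp
      also have "\<dots> = T m * ((1 - A * p ^ m) * (1 - B * p ^ m) * z / (1 - C * p ^ m))"
        using pm[of m] by simp
      finally show ?thesis unfolding u_def by (simp add: algebra_simps)
    qed
    finally show ?thesis .
  qed
  have "T \<longlonglongrightarrow> 0" by (rule summable_LIMSEQ_zero[OF sT])
  then have "u \<longlonglongrightarrow> (1 - 0) * 0"
    unfolding u_def[abs_def]
    by (intro tendsto_mult tendsto_diff tendsto_const LIMSEQ_power_zero) (use p in auto)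
  then have "(\<lambda>m. u m - u (Suc m)) sums (u 0 - 0)"
    by (intro telescope_sums') simp
  then have "(\<lambda>m. (1 - z) * T m - c * T' m) sums 0"
    by (simp add: termeq u_def)
  moreover have "(\<lambda>m. (1 - z) * T m - c * T' m) sums ((1 - z) * suminf T - c * suminf T')"
    by (intro sums_diff sums_mult summable_sums sT sT')
  ultimately have "(1 - z) * suminf T - c * suminf T' = 0" by (metis sums_unique2)
  then show ?thesis unfolding T_def T'_def c_def by simp
qed

lemma norm_lt1_mult:
  fixes z p :: complex
  assumes "norm z < 1" "norm p < 1"
  shows "norm (z * p ^ K) < 1"
proof -
  have "norm (z * p ^ K) = norm z * norm p ^ K" by (simp add: norm_mult norm_power)
  also have "\<dots> \<le> norm z * 1"
    by (intro mult_left_mono power_le_one) (use assms in auto)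
  finally show ?thesis using assms by simp
qed

lemma qt_0 [simp]: "qt A B C z p 0 = 1"
  by (simp add: qt_def)

lemma G_tendsto:
  fixes A B C z p :: complex
  assumes p: "norm p < 1" and z: "norm z < 1" and C: "\<And>k. C * p ^ k \<noteq> 1"
  shows "(\<lambda>K. suminf (qt A B (C * p ^ K) (z * p ^ K) p)) \<longlonglongrightarrow> 1"
proof -
  obtain M where M: "M > 0" "\<And>K w m. norm (qt A B (C * p ^ K) w p m) \<le> M * norm w ^ m"
    using qt_uniform_bound[OF p C] by blast
  have bound: "norm (suminf (qt A B (C * p ^ K) (z * p ^ K) p) - 1)
        \<le> M * norm z / (1 - norm z) * norm p ^ K" for K
  proof -
    define w where "w = z * p ^ K"
    have w1: "norm w < 1" unfolding w_def by (rule norm_lt1_mult[OF z p])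
    have wle: "norm w \<le> norm z * norm p ^ K" unfolding w_def by (simp add: norm_mult norm_power)
    have wle2: "norm w \<le> norm z"
      using wle mult_left_mono[OF power_le_one[of "norm p" K] norm_ge_zero[of z]] p by simp
    have s: "summable (qt A B (C * p ^ K) w p)"
      by (rule summable_norm_cancel[OF qt_summable[OF p C w1]])
    have "suminf (qt A B (C * p ^ K) w p) - 1 = (\<Sum>m. qt A B (C * p ^ K) w p (Suc m))"
      using suminf_split_head[OF s] by simp
    also have "norm \<dots> \<le> (\<Sum>m. M * norm w * norm w ^ m)"
    proof (rule norm_suminf_le)
      show "norm (qt A B (C * p ^ K) w p (Suc m)) \<le> M * norm w * norm w ^ m" for m
        using M(2)[of K w "Suc m"] by (simp add: mult_ac)
      show "summable (\<lambda>m. M * norm w * norm w ^ m)"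
        using w1 by (intro summable_mult summable_geometric) auto
    qed
    also have "\<dots> = M * norm w / (1 - norm w)"
      using suminf_mult[OF summable_geometric[of "norm w"]] w1 suminf_geometric[of "norm w"]
      by (simp add: divide_inverse)
    also have "\<dots> \<le> M * (norm z * norm p ^ K) / (1 - norm z)"
      using M(1) wle wle2 z w1
      by (intro frac_le mult_left_mono) auto
    finally show ?thesis unfolding w_def by (simp add: mult_ac)
  qed
  have "(\<lambda>K. M * norm z / (1 - norm z) * norm p ^ K) \<longlonglongrightarrow> M * norm z / (1 - norm z) * 0"
    by (intro tendsto_mult tendsto_const LIMSEQ_power_zero) (use p in auto)
  then have lim0: "(\<lambda>K. M * norm z / (1 - norm z) * norm p ^ K) \<longlonglongrightarrow> 0" by simp
  have "(\<lambda>K. suminf (qt A B (C * p ^ K) (z * p ^ K) p) - 1) \<longlonglongrightarrow> 0"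
    by (rule Lim_null_comparison[OF always_eventually[OF allI] lim0]) (rule bound)
  then have "(\<lambda>K. (suminf (qt A B (C * p ^ K) (z * p ^ K) p) - 1) + 1) \<longlonglongrightarrow> 0 + 1"
    by (intro tendsto_add tendsto_const)
  then show ?thesis by simp
qed

lemma solve_aux:
  fixes a b c g x :: complex
  assumes "c \<noteq> 0" "c * x = a / b * g"
  shows "x = a / (b * c) * g"
proof -
  have "x = (c * x) / c" using assms(1) by simp
  also have "\<dots> = a / (b * c) * g" unfolding assms(2) by simp
  finally show ?thesis .
qed

theorem qgauss:
  fixes A B C z p :: complex
  assumes p: "norm p < 1" and z: "norm z < 1" and ABC: "A * B * z = C"
    and C: "\<And>k. C * p ^ k \<noteq> 1"
  shows "qt A B C z p sums
           (qpoch_inf (A * z) p * qpoch_inf (B * z) p / (qpoch_inf C p * qpoch_inf z p))"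
proof -
  define G where "G K = suminf (qt A B (C * p ^ K) (z * p ^ K) p)" for K
  define rat where "rat K = qpoch (A * z) p K * qpoch (B * z) p K / (qpoch C p K * qpoch z p K)" for K
  have zk: "z * p ^ k \<noteq> 1" for k using norm_lt1_mult[OF z p, of k] by auto
  have step: "G K = (1 - A * z * p ^ K) * (1 - B * z * p ^ K) / ((1 - C * p ^ K) * (1 - z * p ^ K)) * G (Suc K)" for K
  proof -
    have C': "\<And>k. (C * p ^ K) * p ^ k \<noteq> 1" using C by (metis mult.assoc power_add)
    have ABC': "A * B * (z * p ^ K) = C * p ^ K" using ABC by (simp add: mult.assoc)
    have "(1 - z * p ^ K) * G K = (1 - A * (z * p ^ K)) * (1 - B * (z * p ^ K)) / (1 - C * p ^ K)
           * suminf (qt A B (C * p ^ K * p) (z * p ^ K * p) p)"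
      unfolding G_def by (rule contiguity[OF p norm_lt1_mult[OF z p] ABC' C'])
    also have "C * p ^ K * p = C * p ^ Suc K" by (simp add: mult.assoc)
    also have "z * p ^ K * p = z * p ^ Suc K" by (simp add: mult.assoc)
    finally have "(1 - z * p ^ K) * G K = (1 - A * z * p ^ K) * (1 - B * z * p ^ K) / (1 - C * p ^ K) * G (Suc K)"
      unfolding G_def by (simp add: mult.assoc)
    moreover have "1 - z * p ^ K \<noteq> 0" using zk[of K] by simp
    ultimately show ?thesis by (rule solve_aux[rotated])
  qed
  have main: "G 0 = rat K * G K" for K
  proof (induction K)
    case 0 then show ?case by (simp add: rat_def)
  next
    case (Suc K)
    have n1: "1 - C * p ^ K \<noteq> 0" using C[of K] by simp
    have n2: "1 - z * p ^ K \<noteq> 0" using zk[of K] by simp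
    have "rat (Suc K) = rat K * ((1 - A * z * p ^ K) * (1 - B * z * p ^ K) / ((1 - C * p ^ K) * (1 - z * p ^ K)))"
      unfolding rat_def qpoch_Suc using n1 n2 by (simp add: field_simps)
    then show ?case using Suc step[of K] by (simp add: mult.assoc)
  qed
  have Cinf: "qpoch_inf C p \<noteq> 0" by (rule qpoch_inf_nonzero[OF p C])
  have zinf: "qpoch_inf z p \<noteq> 0" by (rule qpoch_inf_nonzero[OF p zk])
  have "rat \<longlonglongrightarrow> qpoch_inf (A * z) p * qpoch_inf (B * z) p / (qpoch_inf C p * qpoch_inf z p)"
    unfolding rat_def[abs_def]
    by (intro tendsto_divide tendsto_mult qpoch_tendsto p) (use Cinf zinf in auto)
  then have "(\<lambda>K. rat K * G K) \<longlonglongrightarrow> qpoch_inf (A * z) p * qpoch_inf (B * z) p / (qpoch_inf C p * qpoch_inf z p) * 1"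
    unfolding G_def by (intro tendsto_mult G_tendsto[OF p z C])
  moreover have "(\<lambda>K. rat K * G K) \<longlonglongrightarrow> G 0" unfolding main[symmetric] by simp
  ultimately have "G 0 = qpoch_inf (A * z) p * qpoch_inf (B * z) p / (qpoch_inf C p * qpoch_inf z p)"
    using LIMSEQ_unique by fastforce
  moreover have "summable (qt A B C z p)"
    by (rule summable_norm_cancel[OF qt_summable0[OF p C z]])
  ultimately show ?thesis unfolding G_def by (metis summable_sums mult_1 power_0 mult_1_right)
qed

lemma P_Suc: "qpoch (q^2) (q^2) (Suc n) = qpoch (q^2) (q^2) n * (1 - q ^ (2 * n + 2))"
proof -
  have "q\<^sup>2 * (q\<^sup>2) ^ n = q ^ (2 * n + 2)"
    by (simp add: power_mult[symmetric] power_add[symmetric] add.commute)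
  then show ?thesis by (simp add: qpoch_Suc)
qed

lemma q2_norm: fixes q :: complex assumes "norm q < 1" shows "norm (q^2) < 1"
  using assms by (simp add: norm_power power_less_one_iff)

lemma P_nonzero:
  fixes q :: complex assumes "norm q < 1"
  shows "qpoch (q^2) (q^2) n \<noteq> 0"
  by (rule qpoch_nonzero) (use pp_ne_1[OF q2_norm[OF assms]] in auto)

lemma powq_ne_1:
  fixes q :: complex assumes "norm q < 1" "k > 0"
  shows "1 - q ^ k \<noteq> 0" "1 + q ^ k \<noteq> 0"
proof -
  have "norm (q ^ k) < 1" using assms by (simp add: norm_power power_less_one_iff)
  then show "1 - q ^ k \<noteq> 0" "1 + q ^ k \<noteq> 0"
    by (auto simp: add_eq_0_iff)
qed

lemma A1_alg:
  fixes Q Pd Pnk u v :: complex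
  assumes a: "Pd \<noteq> 0" "Pnk \<noteq> 0" "1 - v \<noteq> 0" "1 - u^2 * v \<noteq> 0" "1 + u * v \<noteq> 0"
  shows "(1 - u) * Q / ((Pd * (1 - v)) * (Pnk * (1 - u^2 * v))) + Q * u / ((1 + u * v) * Pd * (Pnk * (1 - u^2 * v)))
       = Q / ((1 + u * v) * (Pd * (1 - v)) * Pnk)"
proof -
  define X where "X = Q / (Pd * Pnk * (1 - u^2 * v))"
  have t1: "(1 - u) * Q / ((Pd * (1 - v)) * (Pnk * (1 - u^2 * v))) = X * ((1 - u) / (1 - v))"
    unfolding X_def by (simp add: mult_ac)
  have t2: "Q * u / ((1 + u * v) * Pd * (Pnk * (1 - u^2 * v))) = X * (u / (1 + u * v))"
    unfolding X_def by (simp add: mult_ac)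
  have k: "(1 - u) / (1 - v) + u / (1 + u * v) = (1 - u^2 * v) / ((1 - v) * (1 + u * v))"
  proof -
    have "(1 - u) * (1 + u * v) + u * (1 - v) = 1 - u^2 * v" by (simp add: algebra_simps power2_eq_square)
    then show ?thesis using a(3,5) by (simp add: add_frac_eq)
  qed
  have "X * ((1 - u^2 * v) / ((1 - v) * (1 + u * v))) = Q / ((1 + u * v) * (Pd * (1 - v)) * Pnk)"
    unfolding X_def using a(4) by (simp add: mult_ac)
  then show ?thesis unfolding t1 t2 distrib_left[symmetric] k .
qed

lemma A1:
  fixes q :: complex
  assumes q: "norm q < 1" and kn: "k \<le> n"
  shows "(\<Sum>r\<in>{k..n}. (1 - q ^ (2 * r + 1)) * q ^ (r^2)
            / (qpoch (q^2) (q^2) (n - r) * qpoch (q^2) (q^2) (n + r + 1)))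
       = q ^ (k^2) / ((1 + q ^ (2 * n + 1)) * qpoch (q^2) (q^2) (n - k) * qpoch (q^2) (q^2) (n + k))"
  using kn
proof (induction k rule: inc_induct)
  case base
  define x where "x = q ^ (2 * n + 1)"
  define Pn where "Pn = qpoch (q^2) (q^2) (n + n)"
  have PS: "qpoch (q^2) (q^2) (n + n + 1) = Pn * ((1 - x) * (1 + x))"
  proof -
    have ee: "2 * (n + n) + 2 = (2 * n + 1) * 2" by simp
    have x2: "q ^ (2 * (n + n) + 2) = x^2"
      unfolding x_def by (simp only: ee power_mult)
    have "qpoch (q^2) (q^2) (n + n + 1) = Pn * (1 - q ^ (2 * (n + n) + 2))"
      using P_Suc[of q "n + n"] unfolding Pn_def by simp
    also have "\<dots> = Pn * ((1 - x) * (1 + x))"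
      unfolding x2 by (simp add: power2_eq_square algebra_simps)
    finally show ?thesis .
  qed
  have n1: "1 + x \<noteq> 0" unfolding x_def by (rule powq_ne_1(2)[OF q]) simp
  have n2: "1 - x \<noteq> 0" unfolding x_def by (rule powq_ne_1(1)[OF q]) simp
  have n3: "Pn \<noteq> 0" unfolding Pn_def by (rule P_nonzero[OF q])
  have "(\<Sum>r\<in>{n..n}. (1 - q ^ (2 * r + 1)) * q ^ (r^2)
            / (qpoch (q^2) (q^2) (n - r) * qpoch (q^2) (q^2) (n + r + 1)))
        = (1 - x) * q ^ (n^2) / (Pn * ((1 - x) * (1 + x)))"
    using PS by (simp add: x_def)
  also have "\<dots> = q ^ (n^2) / ((1 + x) * Pn)"
  proof -
    have d1: "Pn * ((1 - x) * (1 + x)) \<noteq> 0" using n1 n2 n3 by simp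
    have d2: "(1 + x) * Pn \<noteq> 0" using n1 n3 by simp
    show ?thesis unfolding frac_eq_eq[OF d1 d2] by algebra
  qed
  finally show ?case by (simp add: x_def Pn_def)
next
  case (step k)
  define d where "d = n - Suc k"
  have nd: "n = k + Suc d" using step(2) unfolding d_def by simp
  define u where "u = q ^ (2 * k + 1)"
  define v where "v = q ^ (2 * d + 2)"
  define Pd where "Pd = qpoch (q^2) (q^2) d"
  define Pnk where "Pnk = qpoch (q^2) (q^2) (n + k)"
  have e1: "n - k = Suc d" "n - Suc k = d" "n + Suc k = Suc (n + k)" "Suc k + n + 1 = Suc (Suc (n + k))"
    using nd by auto
  have e2: "q ^ (2 * n + 1) = u * v" unfolding u_def v_def power_add[symmetric]
    using nd by (simp add: algebra_simps)
  have e3: "q ^ (2 * (n + k) + 2) = u^2 * v" unfolding u_def v_def power_add[symmetric] power_mult[symmetric]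
    using nd by (simp add: algebra_simps)
  have sk: "(Suc k)^2 = k^2 + (2 * k + 1)" by (simp add: power2_eq_square)
  have e4: "q ^ (Suc k)^2 = q ^ (k^2) * u" unfolding u_def sk power_add ..
  have PSd: "qpoch (q^2) (q^2) (Suc d) = Pd * (1 - v)" unfolding Pd_def v_def P_Suc ..
  have PSnk: "qpoch (q^2) (q^2) (Suc (n + k)) = Pnk * (1 - u^2 * v)" unfolding Pnk_def P_Suc e3 ..
  have nz: "Pd \<noteq> 0" "Pnk \<noteq> 0" unfolding Pd_def Pnk_def using P_nonzero[OF q] by auto
  have nz2: "1 - v \<noteq> 0" unfolding v_def by (rule powq_ne_1(1)[OF q]) simp
  have nz3: "1 - u^2 * v \<noteq> 0" unfolding e3[symmetric] by (rule powq_ne_1(1)[OF q]) simp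
  have nz4: "1 + u * v \<noteq> 0" unfolding e2[symmetric] by (rule powq_ne_1(2)[OF q]) simp
  have "(\<Sum>r\<in>{k..n}. (1 - q ^ (2 * r + 1)) * q ^ (r^2)
            / (qpoch (q^2) (q^2) (n - r) * qpoch (q^2) (q^2) (n + r + 1)))
      = (1 - q ^ (2 * k + 1)) * q ^ (k^2) / (qpoch (q^2) (q^2) (n - k) * qpoch (q^2) (q^2) (n + k + 1))
        + q ^ (Suc k ^ 2) / ((1 + q ^ (2 * n + 1)) * qpoch (q^2) (q^2) (n - Suc k) * qpoch (q^2) (q^2) (n + Suc k))"
    unfolding sum.atLeast_Suc_atMost[OF less_imp_le[OF step(2)]] step.IH by (rule refl)
  also have "\<dots> = (1 - u) * q ^ (k^2) / ((Pd * (1 - v)) * (Pnk * (1 - u^2 * v)))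
        + q ^ (k^2) * u / ((1 + u * v) * Pd * (Pnk * (1 - u^2 * v)))"
    unfolding e1 e2 e4 PSd PSnk[symmetric] by (simp add: u_def Pd_def PSd[unfolded Pd_def])
  also have "\<dots> = q ^ (k^2) / ((1 + u * v) * (Pd * (1 - v)) * Pnk)"
    by (rule A1_alg[OF nz nz2 nz3 nz4])
  also have "\<dots> = q ^ (k^2) / ((1 + q ^ (2 * n + 1)) * qpoch (q^2) (q^2) (n - k) * qpoch (q^2) (q^2) (n + k))"
    unfolding e1 e2 PSd Pnk_def ..
  finally show ?case .
qed

definition hz :: "complex \<Rightarrow> complex \<Rightarrow> nat \<Rightarrow> complex" where
  "hz p z N = (\<Sum>m\<le>N. z ^ m / (qpoch p p m * qpoch p p (N - m)))"

lemma Pp_Suc: "qpoch p p (Suc n) = qpoch p p n * (1 - p ^ Suc n)"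
  by (simp add: qpoch_Suc)

lemma hz_S1:
  assumes nz: "\<And>n. qpoch p p n \<noteq> 0"
  shows "(\<Sum>m\<le>Suc N. z ^ m * (1 - p ^ m) / (qpoch p p m * qpoch p p (Suc N - m))) = z * hz p z N"
proof -
  have "(\<Sum>m\<le>Suc N. z ^ m * (1 - p ^ m) / (qpoch p p m * qpoch p p (Suc N - m)))
      = (\<Sum>m\<le>N. z ^ Suc m * (1 - p ^ Suc m) / (qpoch p p (Suc m) * qpoch p p (Suc N - Suc m)))"
    by (subst sum.atMost_Suc_shift) simp
  also have "\<dots> = (\<Sum>m\<le>N. z * (z ^ m / (qpoch p p m * qpoch p p (N - m))))"
  proof (rule sum.cong[OF refl])
    fix m assume "m \<in> {..N}"
    show "z ^ Suc m * (1 - p ^ Suc m) / (qpoch p p (Suc m) * qpoch p p (Suc N - Suc m))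
        = z * (z ^ m / (qpoch p p m * qpoch p p (N - m)))"
    proof (cases "1 - p ^ Suc m = 0")
      case True
      then have "qpoch p p (Suc m) = 0" by (simp add: Pp_Suc)
      then show ?thesis using nz by blast
    next
      case False
      then show ?thesis by (simp add: Pp_Suc)
    qed
  qed
  also have "\<dots> = z * hz p z N" by (simp add: hz_def sum_distrib_left)
  finally show ?thesis .
qed

lemma hz_S2:
  assumes nz: "\<And>n. qpoch p p n \<noteq> 0"
  shows "(\<Sum>m\<le>Suc N. (z * p) ^ m * (1 - p ^ (Suc N - m)) / (qpoch p p m * qpoch p p (Suc N - m)))
       = hz p (z * p) N"
proof -
  have "(\<Sum>m\<le>Suc N. (z * p) ^ m * (1 - p ^ (Suc N - m)) / (qpoch p p m * qpoch p p (Suc N - m)))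
      = (\<Sum>m\<le>N. (z * p) ^ m * (1 - p ^ (Suc N - m)) / (qpoch p p m * qpoch p p (Suc N - m)))"
    by (subst sum.atMost_Suc) simp
  also have "\<dots> = hz p (z * p) N"
    unfolding hz_def
  proof (rule sum.cong[OF refl])
    fix m assume "m \<in> {..N}"
    then have e: "Suc N - m = Suc (N - m)" by auto
    show "(z * p) ^ m * (1 - p ^ (Suc N - m)) / (qpoch p p m * qpoch p p (Suc N - m))
        = (z * p) ^ m / (qpoch p p m * qpoch p p (N - m))"
    proof (cases "1 - p ^ Suc (N - m) = 0")
      case True
      then have "qpoch p p (Suc (N - m)) = 0" by (simp add: Pp_Suc)
      then show ?thesis using nz by blast
    next
      case False
      then show ?thesis unfolding e by (simp add: Pp_Suc)
    qed
  qed
  finally show ?thesis .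
qed

lemma hz_rec1:
  assumes nz: "\<And>n. qpoch p p n \<noteq> 0"
  shows "hz p z (Suc N) - hz p (z * p) (Suc N) = z * hz p z N"
proof -
  have "hz p z (Suc N) - hz p (z * p) (Suc N)
      = (\<Sum>m\<le>Suc N. z ^ m * (1 - p ^ m) / (qpoch p p m * qpoch p p (Suc N - m)))"
    unfolding hz_def sum_subtractf[symmetric]
    by (rule sum.cong[OF refl]) (simp add: power_mult_distrib diff_divide_distrib algebra_simps)
  then show ?thesis using hz_S1[OF nz] by simp
qed

lemma hz_rec2:
  assumes nz: "\<And>n. qpoch p p n \<noteq> 0"
  shows "(1 - p ^ Suc N) * hz p z (Suc N) = z * hz p z N + hz p (z * p) N"
proof -
  have "(1 - p ^ Suc N) * hz p z (Suc N)
      = (\<Sum>m\<le>Suc N. z ^ m * (1 - p ^ m) / (qpoch p p m * qpoch p p (Suc N - m))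
          + (z * p) ^ m * (1 - p ^ (Suc N - m)) / (qpoch p p m * qpoch p p (Suc N - m)))"
    unfolding hz_def sum_distrib_left
  proof (rule sum.cong[OF refl])
    fix m assume "m \<in> {..Suc N}"
    then have "p ^ m * p ^ (Suc N - m) = p ^ Suc N" by (simp add: power_add[symmetric])
    then show "(1 - p ^ Suc N) * (z ^ m / (qpoch p p m * qpoch p p (Suc N - m)))
        = z ^ m * (1 - p ^ m) / (qpoch p p m * qpoch p p (Suc N - m))
          + (z * p) ^ m * (1 - p ^ (Suc N - m)) / (qpoch p p m * qpoch p p (Suc N - m))"
      by (simp add: power_mult_distrib add_divide_distrib[symmetric] algebra_simps)
  qed
  also have "\<dots> = z * hz p z N + hz p (z * p) N"
    by (simp only: sum.distrib hz_S1[OF nz] hz_S2[OF nz])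
  finally show ?thesis .
qed

lemma hz_rec3:
  assumes nz: "\<And>n. qpoch p p n \<noteq> 0"
  shows "(1 - p ^ Suc (Suc N)) * hz p z (Suc (Suc N)) = (1 + z) * hz p z (Suc N) - z * hz p z N"
  using hz_rec2[OF nz, of "Suc N" z] hz_rec1[OF nz, of z N] by (simp add: algebra_simps)

lemma qq_nonzero:
  fixes q :: complex assumes "norm q < 1"
  shows "qpoch q q n \<noteq> 0"
  by (rule qpoch_nonzero) (use pp_ne_1[OF assms] in auto)

lemma A2:
  fixes q :: complex
  assumes q: "norm q < 1"
  shows "hz (q^2) q N = 1 / qpoch q q N"
proof -
  have nz: "\<And>n. qpoch (q^2) (q^2) n \<noteq> 0" by (rule P_nonzero[OF q])
  have "hz (q^2) q N = 1 / qpoch q q N \<and> hz (q^2) q (Suc N) = 1 / qpoch q q (Suc N)"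
  proof (induction N)
    case 0
    have "1 - q^2 \<noteq> 0" by (rule powq_ne_1(1)[OF q]) simp
    moreover have "1 - q \<noteq> 0" using powq_ne_1(1)[OF q, of 1] by simp
    ultimately show ?case
      by (simp add: hz_def qpoch_Suc field_simps power2_eq_square)
  next
    case (Suc N)
    define a where "a = q ^ Suc N"
    define Q where "Q = qpoch q q N"
    have Q1: "qpoch q q (Suc N) = Q * (1 - a)" unfolding Q_def a_def by (simp add: qpoch_Suc)
    have Q2: "qpoch q q (Suc (Suc N)) = Q * (1 - a) * (1 - q * a)"
      unfolding qpoch_Suc[of q q "Suc N"] Q1 a_def by simp
    have qa: "q * a = q ^ Suc (Suc N)" by (simp add: a_def)
    have pw: "(q^2) ^ Suc (Suc N) = (q * a)^2"
      unfolding qa power_mult[symmetric] by (simp add: mult.commute)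
    have n0: "Q \<noteq> 0" unfolding Q_def by (rule qq_nonzero[OF q])
    have n1: "1 - a \<noteq> 0" unfolding a_def using powq_ne_1(1)[OF q, of "Suc N"] by simp
    have n2: "1 - q * a \<noteq> 0" unfolding a_def using powq_ne_1(1)[OF q, of "Suc (Suc N)"] by simp
    have n3: "1 + q * a \<noteq> 0" unfolding a_def using powq_ne_1(2)[OF q, of "Suc (Suc N)"] by simp
    have n4: "1 - (q * a)^2 \<noteq> 0"
    proof -
      have "1 - (q * a)^2 = (1 - q * a) * (1 + q * a)" by (simp add: power2_eq_square algebra_simps)
      then show ?thesis using n2 n3 by simp
    qed
    have "(1 - (q * a)^2) * hz (q^2) q (Suc (Suc N)) = (1 + q) * (1 / (Q * (1 - a))) - q * (1 / Q)"
      using hz_rec3[OF nz, of N q] Suc.IH unfolding pw Q1 Q_def by simp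
    also have "\<dots> = (1 - (q * a)^2) * (1 / (Q * (1 - a) * (1 - q * a)))"
    proof -
      have d1: "Q * (1 - a) \<noteq> 0" using n0 n1 by simp
      have d3: "Q * (1 - a) * (1 - q * a) \<noteq> 0" using n0 n1 n2 by simp
      have "(1 + q) * (1 / (Q * (1 - a))) - q * (1 / Q) = (1 + q * a) / (Q * (1 - a))"
        unfolding times_divide_eq_right mult_1_right diff_frac_eq[OF d1 n0]
        using n0 n1 d1 by (simp add: frac_eq_eq) algebra
      also have "\<dots> = (1 - (q * a)^2) * (1 / (Q * (1 - a) * (1 - q * a)))"
        unfolding times_divide_eq_right mult_1_right frac_eq_eq[OF d1 d3] by algebra
      finally show ?thesis .
    qed
    finally have "(1 - (q * a)^2) * hz (q^2) q (Suc (Suc N)) = (1 - (q * a)^2) * (1 / qpoch q q (Suc (Suc N)))"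
      unfolding Q2 .
    then have "hz (q^2) q (Suc (Suc N)) = 1 / qpoch q q (Suc (Suc N))"
      using n4 by (rule mult_left_cancel[THEN iffD1, rotated])
    then show ?case using Suc.IH by simp
  qed
  then show ?thesis by simp
qed

definition alpha :: "complex \<Rightarrow> nat \<Rightarrow> complex" where
  "alpha q r = (1 - q ^ (2 * r + 1)) * (\<Sum>j\<in>{- int r..int r}. q powi (int r ^ 2 - j ^ 2 - j))"

lemma bailey_pair:
  fixes q :: complex
  assumes q: "norm q < 1" and q0: "q \<noteq> 0"
  shows "1 / (q ^ n * qpoch q q (2 * n) * (1 + q ^ (2 * n + 1)))
       = (\<Sum>r\<le>n. alpha q r / (qpoch (q^2) (q^2) (n - r) * qpoch (q^2) (q^2) (n + r + 1)))"
proof -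
  define P where "P = qpoch (q^2) (q^2)"
  define c where "c r = (1 - q ^ (2 * r + 1)) * q ^ (r^2) / (P (n - r) * P (n + r + 1))" for r
  define E where "E = 1 + q ^ (2 * n + 1)"
  have E0: "E \<noteq> 0" unfolding E_def by (rule powq_ne_1(2)[OF q]) simp
  have pw: "q powi (int r ^ 2 - j ^ 2 - j) = q ^ (r^2) * q powi (- (j ^ 2) - j)" for r :: nat and j :: int
  proof -
    have "q powi (int r ^ 2 - j ^ 2 - j) = q powi (int (r ^ 2) + (- (j ^ 2) - j))"
      by (intro arg_cong[where f="power_int q"]) simp
    also have "\<dots> = q powi (int (r ^ 2)) * q powi (- (j ^ 2) - j)"
      by (rule power_int_add) (use q0 in auto)
    finally show ?thesis by (simp only: power_int_of_nat)
  qed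
  have "(\<Sum>r\<le>n. alpha q r / (P (n - r) * P (n + r + 1)))
      = (\<Sum>r\<in>{..n}. \<Sum>j\<in>{j\<in>{- int n..int n}. \<bar>j\<bar> \<le> int r}. c r * q powi (- (j ^ 2) - j))"
  proof (rule sum.cong[OF refl])
    fix r assume r: "r \<in> {..n}"
    have set: "{j\<in>{- int n..int n}. \<bar>j\<bar> \<le> int r} = {- int r..int r}" using r by auto
    show "alpha q r / (P (n - r) * P (n + r + 1))
        = (\<Sum>j\<in>{j\<in>{- int n..int n}. \<bar>j\<bar> \<le> int r}. c r * q powi (- (j ^ 2) - j))"
      unfolding set alpha_def c_def pw sum_distrib_left[symmetric]
      by (simp add: sum_distrib_left sum_divide_distrib mult_ac)
  qed
  also have "\<dots> = (\<Sum>j\<in>{- int n..int n}. \<Sum>r\<in>{r\<in>{..n}. \<bar>j\<bar> \<le> int r}. c r * q powi (- (j ^ 2) - j))"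
    by (rule sum.swap_restrict) auto
  also have "\<dots> = (\<Sum>j\<in>{- int n..int n}. q powi (- j) / (E * P (nat (int n - j)) * P (nat (int n + j))))"
  proof (rule sum.cong[OF refl])
    fix j assume j: "j \<in> {- int n..int n}"
    define k where "k = nat \<bar>j\<bar>"
    have kn: "k \<le> n" using j unfolding k_def by auto
    have set: "{r\<in>{..n}. \<bar>j\<bar> \<le> int r} = {k..n}" unfolding k_def by auto
    have A: "(\<Sum>r\<in>{k..n}. c r) = q ^ (k^2) / (E * P (n - k) * P (n + k))"
      unfolding c_def P_def E_def using A1[OF q kn] by simp
    have pk: "q powi (- (j ^ 2) - j) * q ^ (k^2) = q powi (- j)"
    proof -
      have "q ^ (k^2) = q powi (j ^ 2)"
      proof -
        have "int (k^2) = j^2" unfolding k_def by (simp add: power2_eq_square abs_mult_self_eq)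
        then show ?thesis by (metis power_int_of_nat)
      qed
      moreover have "q powi (- (j ^ 2) - j) * q powi (j ^ 2) = q powi (- (j ^ 2) - j + j ^ 2)"
        by (rule power_int_add[symmetric]) (use q0 in auto)
      ultimately show ?thesis by simp
    qed
    have PP: "P (n - k) * P (n + k) = P (nat (int n - j)) * P (nat (int n + j))"
    proof (cases "j \<ge> 0")
      case True
      then have "n - k = nat (int n - j)" "n + k = nat (int n + j)" unfolding k_def using kn by auto
      then show ?thesis by simp
    next
      case False
      then have "n - k = nat (int n + j)" "n + k = nat (int n - j)" unfolding k_def using kn by auto
      then show ?thesis by (simp add: mult.commute)
    qed
    show "(\<Sum>r\<in>{r\<in>{..n}. \<bar>j\<bar> \<le> int r}. c r * q powi (- (j ^ 2) - j))
        = q powi (- j) / (E * P (nat (int n - j)) * P (nat (int n + j)))"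
      unfolding set sum_distrib_right[symmetric] A
      using pk PP by (simp add: mult_ac)
  qed
  also have "\<dots> = (\<Sum>m\<le>2 * n. q ^ m / q ^ n / (E * P m * P (2 * n - m)))"
  proof (rule sum.reindex_bij_witness[where i = "\<lambda>m. int n - int m" and j = "\<lambda>j. nat (int n - j)"])
    fix j assume j: "j \<in> {- int n..int n}"
    show "int n - int (nat (int n - j)) = j" using j by auto
    show "nat (int n - j) \<in> {..2 * n}" using j by auto
    have "q ^ nat (int n - j) / q ^ n = q powi (int (nat (int n - j)) - int n)"
      using power_int_diff[of q "int (nat (int n - j))" "int n"] q0 by (simp only: power_int_of_nat) simp
    also have "int (nat (int n - j)) - int n = - j" using j by auto
    finally have e: "q ^ nat (int n - j) / q ^ n = q powi (- j)" .
    have e2: "2 * n - nat (int n - j) = nat (int n + j)" using j by auto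
    show "q ^ nat (int n - j) / q ^ n / (E * P (nat (int n - j)) * P (2 * n - nat (int n - j)))
        = q powi (- j) / (E * P (nat (int n - j)) * P (nat (int n + j)))"
      unfolding e e2 ..
  next
    fix m assume m: "m \<in> {..2 * n}"
    show "nat (int n - (int n - int m)) = m" by simp
    show "int n - int m \<in> {- int n..int n}" using m by auto
  qed
  also have "\<dots> = hz (q^2) q (2 * n) / (q ^ n * E)"
    unfolding hz_def P_def sum_divide_distrib
    by (rule sum.cong[OF refl]) (simp add: field_simps)
  also have "\<dots> = 1 / (q ^ n * qpoch q q (2 * n) * (1 + q ^ (2 * n + 1)))"
    unfolding A2[OF q] E_def by simp
  finally show ?thesis unfolding P_def ..
qed

lemma summable_lin_geom:
  fixes x :: real
  assumes "0 \<le> x" "x < 1"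
  shows "summable (\<lambda>r. real (2 * r + 1) * x ^ r)"
proof -
  have s: "summable (\<lambda>k. norm (x ^ k))" using assms by (simp add: summable_geometric)
  have "summable (\<lambda>k. \<Sum>i\<le>k. x ^ i * x ^ (k - i))"
    by (rule summable_Cauchy_product[OF s s])
  moreover have "(\<Sum>i\<le>k. x ^ i * x ^ (k - i)) = real (k + 1) * x ^ k" for k
  proof -
    have "(\<Sum>i\<le>k. x ^ i * x ^ (k - i)) = (\<Sum>i\<le>k. x ^ k)"
      by (rule sum.cong[OF refl]) (simp add: power_add[symmetric])
    then show ?thesis by simp
  qed
  ultimately have "summable (\<lambda>k. real (k + 1) * x ^ k)" by simp
  then have "summable (\<lambda>k. 2 * (real (k + 1) * x ^ k))" by (rule summable_mult)
  then show ?thesis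
  proof (rule summable_comparison_test[rotated])
    show "\<exists>N. \<forall>n\<ge>N. norm (real (2 * n + 1) * x ^ n) \<le> 2 * (real (n + 1) * x ^ n)"
    proof (intro exI allI impI)
      fix n :: nat
      have "real (2 * n + 1) * x ^ n \<le> real (2 * n + 2) * x ^ n"
        by (intro mult_right_mono) (use assms in auto)
      then show "norm (real (2 * n + 1) * x ^ n) \<le> 2 * (real (n + 1) * x ^ n)"
        using assms by (simp add: algebra_simps)
    qed
  qed
qed

lemma expo_bound:
  fixes r :: nat and j :: int
  assumes "\<bar>j\<bar> \<le> int r"
  shows "int r ^ 2 - j ^ 2 - j \<ge> - int r"
proof -
  have "(int r - j) * (int r + j + 1) \<ge> 0" using assms by (intro mult_nonneg_nonneg) auto
  then show ?thesis by (simp add: algebra_simps power2_eq_square)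
qed

lemma powi_le_bound:
  fixes x :: real
  assumes "0 < x" "x \<le> 1" "e \<ge> - int r"
  shows "x powi e \<le> (1 / x) ^ r"
proof -
  have "x powi e = x powi (- int r + (e + int r))" by simp
  also have "\<dots> = x powi (- int r) * x powi (e + int r)"
    by (rule power_int_add) (use assms in auto)
  also have "\<dots> \<le> x powi (- int r) * 1"
    by (intro mult_left_mono power_int_le_one) (use assms in auto)
  also have "\<dots> = (1 / x) ^ r" by (simp add: power_int_minus power_one_over divide_inverse power_inverse)
  finally show ?thesis .
qed

lemma alpha_bound:
  fixes q :: complex
  assumes q: "norm q < 1" and q0: "q \<noteq> 0"
  shows "norm (alpha q r) \<le> 2 * (real (2 * r + 1) * (1 / norm q) ^ r)"
proof -
  have n1: "norm (1 - q ^ (2 * r + 1)) \<le> 2"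
  proof -
    have "norm (1 - q ^ (2 * r + 1)) \<le> norm (1::complex) + norm (q ^ (2 * r + 1))" by (rule norm_triangle_ineq4)
    also have "norm (q ^ (2 * r + 1)) \<le> 1" unfolding norm_power using q by (intro power_le_one) auto
    finally show ?thesis by simp
  qed
  have n2: "norm (\<Sum>j\<in>{- int r..int r}. q powi (int r ^ 2 - j ^ 2 - j)) \<le> real (2 * r + 1) * (1 / norm q) ^ r"
  proof -
    have "norm (\<Sum>j\<in>{- int r..int r}. q powi (int r ^ 2 - j ^ 2 - j))
        \<le> (\<Sum>j\<in>{- int r..int r}. norm (q powi (int r ^ 2 - j ^ 2 - j)))" by (rule norm_sum)
    also have "\<dots> \<le> (\<Sum>j\<in>{- int r..int r}. (1 / norm q) ^ r)"
    proof (rule sum_mono)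
      fix j assume "j \<in> {- int r..int r}"
      then have "\<bar>j\<bar> \<le> int r" by auto
      then show "norm (q powi (int r ^ 2 - j ^ 2 - j)) \<le> (1 / norm q) ^ r"
        unfolding norm_power_int using q q0 by (intro powi_le_bound expo_bound) auto
    qed
    also have "\<dots> = real (2 * r + 1) * (1 / norm q) ^ r"
    proof -
      have "card {- int r..int r} = 2 * r + 1" by simp
      then show ?thesis by simp
    qed
    finally show ?thesis .
  qed
  have "norm (alpha q r) = norm (1 - q ^ (2 * r + 1)) * norm (\<Sum>j\<in>{- int r..int r}. q powi (int r ^ 2 - j ^ 2 - j))"
    by (simp add: alpha_def norm_mult)
  also have "\<dots> \<le> 2 * (real (2 * r + 1) * (1 / norm q) ^ r)"
    by (intro mult_mono n1 n2) auto
  finally show ?thesis .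
qed

lemma prod_abs_summable:
  fixes u v :: "nat \<Rightarrow> real"
  assumes u0: "\<And>r. u r \<ge> 0" and v0: "\<And>m. v m \<ge> 0"
    and su: "summable u" and sv: "summable v"
  shows "(\<lambda>x. norm ((\<lambda>(r, m). u r * v m) x)) summable_on UNIV"
proof -
  have uS: "u summable_on UNIV" by (rule norm_summable_imp_summable_on) (use su u0 in simp)
  have vS: "v summable_on UNIV" by (rule norm_summable_imp_summable_on) (use sv v0 in simp)
  have e: "(\<lambda>x. norm ((\<lambda>(r, m). u r * v m) x)) = (\<lambda>(r, m). u r * v m)"
    using u0 v0 by (auto simp: abs_mult)
  have "(\<lambda>(r, m). u r * v m) summable_on Sigma UNIV (\<lambda>_. UNIV)"
  proof (rule summable_on_SigmaI[where g = "\<lambda>r. u r * infsum v UNIV"])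
    show "((\<lambda>m. (\<lambda>(r, m). u r * v m) (r, m)) has_sum u r * infsum v UNIV) UNIV" if "r \<in> UNIV" for r
      using has_sum_cmult_right[OF has_sum_infsum[OF vS], of "u r"] by simp
    show "(\<lambda>r. u r * infsum v UNIV) summable_on UNIV" by (rule summable_on_cmult_left[OF uS])
    show "0 \<le> (\<lambda>(r, m). u r * v m) (x, y)" for x y
      using u0 v0 by simp
  qed
  then show ?thesis unfolding e by simp
qed

theorem theorem8p4:
  fixes q a c :: complex
  assumes "0 < norm q" and "norm q < 1"
    and "a \<noteq> 0" and "c \<noteq> 0"
    and "\<And>n. qpoch (q^2 * a) (q^2) n \<noteq> 0"
    and "\<And>n. qpoch (q^2 * c) (q^2) n \<noteq> 0"
    and "norm (a * c / q) < 1"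
  defines "L \<equiv> (\<lambda>n::nat. qpoch (q^2 / a) (q^2) n * qpoch (q^2 / c) (q^2) n * (a * c / q) ^ n
                 / (qpoch q q (2 * n) * (1 + q ^ (2 * n + 1))))"
    and "R \<equiv> (\<lambda>n::nat. \<Sum>j\<in>{- int n..int n}.
                 (1 - q ^ (2 * n + 1)) * q powi (int n ^ 2 - j ^ 2 - j)
                 * qpoch (q^2 / a) (q^2) n * qpoch (q^2 / c) (q^2) n * (a * c) ^ n
                 / (qpoch (q^2 * a) (q^2) n * qpoch (q^2 * c) (q^2) n))"
  shows "summable L \<and> summable R \<and>
         qpoch_inf (q^2) (q^2) * qpoch_inf (a * c) (q^2)
           / (qpoch_inf (q^2 * a) (q^2) * qpoch_inf (q^2 * c) (q^2)) * (\<Sum>n. L n)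
         = (\<Sum>n. R n)"
proof -
  define p where "p = q^2"
  define z where "z = a * c"
  have q0: "q \<noteq> 0" using assms(1) by auto
  have qn: "norm q < 1" by (rule assms(2))
  have pn: "norm p < 1" unfolding p_def by (rule q2_norm[OF qn])
  have zq: "norm z < norm q"
  proof -
    have "norm z = norm (a * c / q) * norm q" using q0 by (simp add: z_def norm_divide)
    also have "\<dots> < 1 * norm q" using assms(7) assms(1) by (intro mult_strict_right_mono) auto
    finally show ?thesis by simp
  qed
  have zn: "norm z < 1" using zq qn by simp
  define rho where "rho n = qpoch (p / a) p n * qpoch (p / c) p n" for n
  define D where "D n = qpoch (p * a) p n * qpoch (p * c) p n" for n
  define P where "P = qpoch p p"
  define f where "f = (\<lambda>(n, r). rho n * z ^ n * alpha q r / (P (n - r) * P (n + r + 1)))"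
  define h where "h = (\<lambda>(r, m). f (r + m, r))"

  \<comment> \<open>L as a finite Bailey sum\<close>
  have Lf: "L n = (\<Sum>r\<le>n. f (n, r))" for n
  proof -
    have "L n = rho n * z ^ n * (1 / (q ^ n * qpoch q q (2 * n) * (1 + q ^ (2 * n + 1))))"
      unfolding L_def rho_def z_def p_def by (simp add: power_divide)
    also have "\<dots> = rho n * z ^ n * (\<Sum>r\<le>n. alpha q r / (P (n - r) * P (n + r + 1)))"
      unfolding bailey_pair[OF qn q0] P_def p_def ..
    also have "\<dots> = (\<Sum>r\<le>n. f (n, r))"
      unfolding f_def sum_distrib_left by (simp add: mult.assoc)
    finally show ?thesis .
  qed
  have Leq: "L = (\<lambda>n. \<Sum>r\<le>n. f (n, r))" by (rule ext) (rule Lf)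

  obtain B1 where B1: "B1 > 0" "\<And>n. norm (qpoch (p / a) p n) \<le> B1"
    using qpoch_bounded[OF pn] by blast
  obtain B2 where B2: "B2 > 0" "\<And>n. norm (qpoch (p / c) p n) \<le> B2"
    using qpoch_bounded[OF pn] by blast
  obtain LP where LP: "LP > 0" "\<And>n. LP \<le> norm (P n)"
    using qpoch_lower_bound[OF pn pp_ne_1[OF pn]] unfolding P_def by blast
  define K where "K = 2 * B1 * B2 / (LP * LP)"
  define x where "x = norm z / norm q"
  have x0: "0 \<le> x" and x1: "x < 1" unfolding x_def using zq assms(1) by auto
  have K0: "K \<ge> 0" unfolding K_def using B1 B2 LP by simp
  have hb: "norm (h (r, m)) \<le> K * (real (2 * r + 1) * x ^ r) * norm z ^ m" for r m
  proof -
    have e: "r + m - r = m" by simp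
    have num: "norm (rho (r + m) * z ^ (r + m) * alpha q r)
        \<le> (B1 * B2) * (norm z ^ r * norm z ^ m) * (2 * (real (2 * r + 1) * (1 / norm q) ^ r))"
      unfolding norm_mult rho_def norm_power power_add
      by (intro mult_mono alpha_bound[OF qn q0] B1(2) B2(2)) (use B1 B2 in auto)
    have den: "LP * LP \<le> norm (P m * P (r + m + r + 1))"
      unfolding norm_mult by (intro mult_mono LP(2)) (use LP in auto)
    have "norm (h (r, m)) = norm (rho (r + m) * z ^ (r + m) * alpha q r) / norm (P m * P (r + m + r + 1))"
      unfolding h_def f_def e by (simp add: norm_divide)
    also have "\<dots> \<le> (B1 * B2) * (norm z ^ r * norm z ^ m) * (2 * (real (2 * r + 1) * (1 / norm q) ^ r)) / (LP * LP)"
      by (rule frac_le[OF _ num _ den]) (use B1 B2 LP in auto)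
    also have "\<dots> = K * (real (2 * r + 1) * x ^ r) * norm z ^ m"
      unfolding K_def x_def by (simp add: power_divide field_simps)
    finally show ?thesis .
  qed

  have gabs: "(\<lambda>y. norm ((\<lambda>(r, m). (K * (real (2 * r + 1) * x ^ r)) * norm z ^ m) y)) summable_on UNIV"
    by (rule prod_abs_summable)
       (use K0 x0 summable_mult[OF summable_lin_geom[OF x0 x1], of K] zn in \<open>auto intro: summable_geometric\<close>)
  have hs: "h summable_on UNIV"
    unfolding summable_on_iff_abs_summable_on_complex
  proof (rule Infinite_Sum.abs_summable_on_comparison_test[OF gabs])
    fix y :: "nat \<times> nat"
    obtain r m where y: "y = (r, m)" by (cases y)
    show "norm (h y) \<le> norm ((\<lambda>(r, m). (K * (real (2 * r + 1) * x ^ r)) * norm z ^ m) y)"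
      unfolding y using hb[of r m] K0 x0 by simp
  qed
  define H where "H = infsum h UNIV"
  have hH: "(h has_sum H) UNIV" unfolding H_def using hs by simp

  \<comment> \<open>summing along diagonals gives L\<close>
  have fH: "(f has_sum H) (Sigma UNIV (\<lambda>n. {..n}))"
  proof -
    have "(h has_sum H) UNIV = (f has_sum H) (Sigma UNIV (\<lambda>n. {..n}))"
      by (rule has_sum_reindex_bij_witness[where i = "\<lambda>(n, r). (r, n - r)" and j = "\<lambda>(r, m). (r + m, r)"])
         (auto simp: h_def)
    then show ?thesis using hH by simp
  qed
  have LH: "L sums H"
  proof -
    have "((\<lambda>n. \<Sum>r\<le>n. f (n, r)) has_sum H) UNIV"
      by (rule has_sum_SigmaD[OF fH]) (auto intro: has_sum_finiteI)
    then show ?thesis unfolding Leq by (rule has_sum_imp_sums)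
  qed

  \<comment> \<open>summing rows via q-Gauss\<close>
  define A where "A r = p / a * p ^ r" for r
  define B where "B r = p / c * p ^ r" for r
  define C where "C r = p * p ^ (2 * r + 1)" for r :: nat
  define coef where "coef r = alpha q r * rho r * z ^ r / P (2 * r + 1)" for r
  define V where "V r = qpoch_inf (A r * z) p * qpoch_inf (B r * z) p / (qpoch_inf (C r) p * qpoch_inf z p)" for r
  have hq: "h (r, m) = coef r * qt (A r) (B r) (C r) z p m" for r m
  proof -
    have e1: "r + m - r = m" by simp
    have e2: "r + m + r + 1 = (2 * r + 1) + m" by simp
    have rs: "rho (r + m) = rho r * (qpoch (A r) p m * qpoch (B r) p m)"
      unfolding rho_def A_def B_def qpoch_add by (simp add: mult_ac)
    have Ps: "P (r + m + r + 1) = P (2 * r + 1) * qpoch (C r) p m"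
      unfolding e2 P_def C_def qpoch_add ..
    have h0: "h (r, m) = rho (r + m) * z ^ (r + m) * alpha q r / (P m * P (r + m + r + 1))"
      unfolding h_def f_def e1 by simp
    show ?thesis
      unfolding h0 coef_def qt_def rs Ps power_add P_def[symmetric]
      by (simp add: mult_ac)
  qed
  have GV: "(\<lambda>m. h (r, m)) sums (coef r * V r)" for r
  proof -
    have ABC: "A r * B r * z = C r"
      unfolding A_def B_def C_def z_def using assms(3,4)
      by (simp add: field_simps power_add power_mult_distrib) (metis power_add mult_2_right)
    have Ck: "C r * p ^ k \<noteq> 1" for k
    proof -
      have "C r * p ^ k = p ^ (2 * r + 2 + k)" unfolding C_def by (simp add: power_add mult_ac)
      then show ?thesis using pow_ne_1[OF pn, of "2 * r + 2 + k"] by simp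
    qed
    have "qt (A r) (B r) (C r) z p sums V r"
      unfolding V_def by (rule qgauss[OF pn zn ABC Ck])
    then show ?thesis unfolding hq by (rule sums_mult)
  qed
  have rowH: "((\<lambda>m. h (r, m)) has_sum (coef r * V r)) UNIV" for r
  proof (rule norm_summable_imp_has_sum[OF _ GV])
    show "summable (\<lambda>m. norm (h (r, m)))"
      by (rule summable_comparison_test'[where N = 0, OF summable_mult[OF summable_geometric]])
         (use hb zn in auto)
  qed
  have RH0: "(\<lambda>r. coef r * V r) sums H"
  proof -
    have "((\<lambda>r. coef r * V r) has_sum H) UNIV"
      by (rule has_sum_SigmaD[where B = "\<lambda>_. UNIV"]) (use hH rowH in simp_all)
    then show ?thesis by (rule has_sum_imp_sums)
  qed

  define Pref where "Pref = qpoch_inf (q^2) (q^2) * qpoch_inf (a * c) (q^2)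
           / (qpoch_inf (q^2 * a) (q^2) * qpoch_inf (q^2 * c) (q^2))"
  have nz_a: "p * a * p ^ k \<noteq> 1" for k
  proof -
    have "qpoch (p * a) p (Suc k) \<noteq> 0" using assms(5) unfolding p_def by blast
    then show ?thesis by (auto simp: qpoch_Suc)
  qed
  have nz_c: "p * c * p ^ k \<noteq> 1" for k
  proof -
    have "qpoch (p * c) p (Suc k) \<noteq> 0" using assms(6) unfolding p_def by blast
    then show ?thesis by (auto simp: qpoch_Suc)
  qed
  have Rr: "R r = Pref * (coef r * V r)" for r
  proof -
    have Rform: "R r = alpha q r * rho r * z ^ r / D r"
      unfolding R_def alpha_def rho_def D_def z_def p_def
      by (simp add: sum_distrib_left sum_distrib_right sum_divide_distrib mult_ac)
    define Ia where "Ia = qpoch_inf (p * a * p ^ r) p"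
    define Ic where "Ic = qpoch_inf (p * c * p ^ r) p"
    define IC where "IC = qpoch_inf (C r) p"
    define Iz where "Iz = qpoch_inf z p"
    have Az: "A r * z = p * c * p ^ r" unfolding A_def z_def using assms(3) by (simp add: field_simps)
    have Bz: "B r * z = p * a * p ^ r" unfolding B_def z_def using assms(4) by (simp add: field_simps)
    have V': "V r = Ic * Ia / (IC * Iz)" unfolding V_def Az Bz Ia_def Ic_def IC_def Iz_def ..
    have sP: "qpoch_inf p p = P (2 * r + 1) * IC"
      unfolding P_def IC_def C_def using qpoch_inf_split[OF pn, of p "2 * r + 1"] by simp
    have sa: "qpoch_inf (p * a) p = qpoch (p * a) p r * Ia"
      unfolding Ia_def by (rule qpoch_inf_split[OF pn])
    have sc: "qpoch_inf (p * c) p = qpoch (p * c) p r * Ic"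
      unfolding Ic_def by (rule qpoch_inf_split[OF pn])
    have Pref': "Pref = P (2 * r + 1) * IC * Iz / ((qpoch (p * a) p r * Ia) * (qpoch (p * c) p r * Ic))"
      unfolding Pref_def p_def[symmetric] z_def[symmetric] sP sa sc Iz_def ..
    have n1: "P (2 * r + 1) \<noteq> 0" unfolding P_def by (rule qpoch_nonzero) (use pp_ne_1[OF pn] in auto)
    have n2: "IC \<noteq> 0" unfolding IC_def
    proof (rule qpoch_inf_nonzero[OF pn])
      fix k show "C r * p ^ k \<noteq> 1"
      proof -
        have "C r * p ^ k = p ^ (2 * r + 2 + k)" unfolding C_def by (simp add: power_add mult_ac)
        then show ?thesis using pow_ne_1[OF pn, of "2 * r + 2 + k"] by simp
      qed
    qed
    have n3: "Iz \<noteq> 0" unfolding Iz_def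
      by (rule qpoch_inf_nonzero[OF pn]) (metis norm_lt1_mult[OF zn pn] norm_one less_irrefl)
    have n4: "Ia \<noteq> 0" unfolding Ia_def
      by (rule qpoch_inf_nonzero[OF pn]) (use nz_a in \<open>simp add: mult.assoc power_add[symmetric]\<close>)
    have n5: "Ic \<noteq> 0" unfolding Ic_def
      by (rule qpoch_inf_nonzero[OF pn]) (use nz_c in \<open>simp add: mult.assoc power_add[symmetric]\<close>)
    have n6: "qpoch (p * a) p r \<noteq> 0" using assms(5) unfolding p_def by blast
    have n7: "qpoch (p * c) p r \<noteq> 0" using assms(6) unfolding p_def by blast
    show ?thesis
      unfolding Rform Pref' coef_def V' D_def using n1 n2 n3 n4 n5 n6 n7
      by (simp add: field_simps)
  qed
  have RH: "R sums (Pref * H)"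
  proof -
    have "(\<lambda>r. Pref * (coef r * V r)) sums (Pref * H)" by (rule sums_mult[OF RH0])
    moreover have "R = (\<lambda>r. Pref * (coef r * V r))" by (rule ext) (rule Rr)
    ultimately show ?thesis by simp
  qed
  show ?thesis
    using LH RH unfolding Pref_def by (auto simp: sums_iff)
qed


end
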